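(* Assume every tuple $t\in R_x$ has $w_{tj}>0$ for at least one $j$, so that all marginal gains $\mathbb{Q}(B\cup\{t\})-\mathbb{Q}(B)$ for $t\notin B$ are strictly positive, and assume $K\le N$. Define $$\kappa=1-\min_{t\in R_x}\ \min_{A,B\subseteq R_x\setminus\{t\}}\frac{\mathbb{Q}(A\cup\{t\})-\mathbb{Q}(A)}{\mathbb{Q}(B\cup\{t\})-\mathbb{Q}(B)}.$$ Let $O\subseteq R_x$ with $|O|\le K$ be an optimal deletion set, i.e. one maximizing $\mathbb{Q}$ among all sets of size at most $K$. Let $\Delta D$ be the output of the deletion-only greedy procedure, defined as follows. Start with $\Delta D_0=\emptyset$. For $i=0,\dots,K-1$, set $\Delta D_{i+1}=\Delta D_i\cup\{t\}$, where $t\in R_x\setminus \Delta D_i$ maximizes $\mathbb{Q}(\Delta D_i\cup\{t\})$. Finally $\Delta D=\Delta D_K$. Then $$\mathbb{Q}(\Delta D)\ \ge\ (1-\kappa)\,\mathbb{Q}(O).$$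
   Context: Setting: $R_x=\{t_1,\dots,t_N\}$ and $M$ queries, with joint weights $w_{ij}\in\mathbb{Z}_{\ge0}$ and $C_j=\sum_{i=1}^N w_{ij}$. The deletion-only total Qerror is $\mathbb{Q}(X)=\sum_{j=1}^M\frac{C_j+1}{C_j+1-\sum_{t_i\in X}w_{ij}}$ for $X\subseteq R_x$, where $X$ is the set of deleted tuples, and $K$ is the attack budget. *)

theory Defs
  imports Complex_Main
begin

text \<open>Tuples have type 'a; the relation R_x is a finite set R of tuples.
  Queries are indexed by j < M; w t j is the joint weight of tuple t and query j.\<close>

definition Ccnt :: "'a set \<Rightarrow> ('a \<Rightarrow> nat \<Rightarrow> nat) \<Rightarrow> nat \<Rightarrow> nat" where
  "Ccnt R w j = (\<Sum>t\<in>R. w t j)"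

definition Qerr :: "'a set \<Rightarrow> nat \<Rightarrow> ('a \<Rightarrow> nat \<Rightarrow> nat) \<Rightarrow> 'a set \<Rightarrow> real" where
  "Qerr R M w X = (\<Sum>j<M. (real (Ccnt R w j) + 1) /
                          (real (Ccnt R w j) + 1 - real (\<Sum>t\<in>X. w t j)))"

definition kappa :: "'a set \<Rightarrow> nat \<Rightarrow> ('a \<Rightarrow> nat \<Rightarrow> nat) \<Rightarrow> real" where
  "kappa R M w = 1 - Min {(Qerr R M w (insert t A) - Qerr R M w A) /
                          (Qerr R M w (insert t B) - Qerr R M w B) | t A B.
                          t \<in> R \<and> A \<subseteq> R - {t} \<and> B \<subseteq> R - {t}}"

definition greedy_run :: "'a set \<Rightarrow> nat \<Rightarrow> ('a \<Rightarrow> nat \<Rightarrow> nat) \<Rightarrow> nat \<Rightarrow> (nat \<Rightarrow> 'a set) \<Rightarrow> bool" where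
  "greedy_run R M w K D \<longleftrightarrow> D 0 = {} \<and>
     (\<forall>i<K. \<exists>t\<in>R - D i. D (Suc i) = insert t (D i) \<and>
        (\<forall>t'\<in>R - D i. Qerr R M w (insert t' (D i)) \<le> Qerr R M w (insert t (D i))))"

definition optimal_deletion :: "'a set \<Rightarrow> nat \<Rightarrow> ('a \<Rightarrow> nat \<Rightarrow> nat) \<Rightarrow> nat \<Rightarrow> 'a set \<Rightarrow> bool" where
  "optimal_deletion R M w K Opt \<longleftrightarrow> Opt \<subseteq> R \<and> card Opt \<le> K \<and>
     (\<forall>X. X \<subseteq> R \<and> card X \<le> K \<longrightarrow> Qerr R M w X \<le> Qerr R M w Opt)"

end

theory Submission imports Defs begin

lemma term_le:
  fixes C s s' :: nat
  assumes "s \<le> s'" "s' \<le> C"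
  shows "(real C + 1) / (real C + 1 - real s) \<le> (real C + 1) / (real C + 1 - real s')"
  using assms by (intro divide_left_mono) auto

lemma term_less:
  fixes C s s' :: nat
  assumes "s < s'" "s' \<le> C"
  shows "(real C + 1) / (real C + 1 - real s) < (real C + 1) / (real C + 1 - real s')"
  using assms by (intro divide_strict_left_mono) (auto simp: mult_pos_pos)

lemma Qerr_strict:
  assumes "finite R" "A \<subseteq> R" "t \<in> R" "t \<notin> A" "\<exists>j<M. w t j > 0"
  shows "Qerr R M w A < Qerr R M w (insert t A)"
proof -
  define C where "C j = Ccnt R w j" for j
  define sA where "sA j = (\<Sum>x\<in>A. w x j)" for j
  define sI where "sI j = (\<Sum>x\<in>insert t A. w x j)" for j
  have fA: "finite A" using assms finite_subset by blast
  have le: "sI j \<le> C j" for j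
    unfolding Ccnt_def C_def sI_def using assms by (intro sum_mono2) auto
  have ins: "sI j = w t j + sA j" for j
    unfolding sI_def sA_def using fA assms(4) by (rule sum.insert)
  have "(\<Sum>j<M. (real (C j) + 1) / (real (C j) + 1 - real (sA j)))
      < (\<Sum>j<M. (real (C j) + 1) / (real (C j) + 1 - real (sI j)))"
  proof (rule sum_strict_mono_ex1)
    show "\<forall>j\<in>{..<M}. (real (C j) + 1) / (real (C j) + 1 - real (sA j))
      \<le> (real (C j) + 1) / (real (C j) + 1 - real (sI j))"
    proof
      fix j
      have "sA j \<le> sI j" using ins[of j] by linarith
      then show "(real (C j) + 1) / (real (C j) + 1 - real (sA j))
      \<le> (real (C j) + 1) / (real (C j) + 1 - real (sI j))"
        by (rule term_le) (rule le)
    qed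
    obtain j where j: "j < M" "w t j > 0" using assms by blast
    have "sA j < sI j" using ins[of j] j by linarith
    then have "(real (C j) + 1) / (real (C j) + 1 - real (sA j))
      < (real (C j) + 1) / (real (C j) + 1 - real (sI j))"
      by (rule term_less) (rule le)
    then show "\<exists>j\<in>{..<M}. (real (C j) + 1) / (real (C j) + 1 - real (sA j))
      < (real (C j) + 1) / (real (C j) + 1 - real (sI j))" using j by blast
  qed simp
  then show ?thesis unfolding Qerr_def C_def sA_def sI_def .
qed

lemma Qerr_empty: "Qerr R M w {} = real M"
  unfolding Qerr_def by simp


lemma tele_bound:
  fixes Q :: "'a set \<Rightarrow> real"
  assumes "finite Os" "Os \<subseteq> R"
    "\<forall>u\<in>Os. \<forall>B. B \<subseteq> R - {u} \<longrightarrow> m * (Q (insert u B) - Q B) \<le> h u"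
  shows "m * (Q Os - Q {}) \<le> (\<Sum>u\<in>Os. h u)"
  using assms
proof (induction Os rule: finite_induct)
  case empty
  then show ?case by simp
next
  case (insert x F)
  have FR: "F \<subseteq> R - {x}" using insert.prems(1) insert.hyps(2) by blast
  have h1: "m * (Q (insert x F) - Q F) \<le> h x" using insert.prems(2) FR by blast
  have h2: "m * (Q F - Q {}) \<le> (\<Sum>u\<in>F. h u)" using insert.IH insert.prems by blast
  have s: "(\<Sum>u\<in>insert x F. h u) = h x + (\<Sum>u\<in>F. h u)" using insert.hyps by (rule sum.insert)
  have e: "m * (Q (insert x F) - Q {}) = m * (Q (insert x F) - Q F) + m * (Q F - Q {})"
    by (simp add: right_diff_distrib)
  show ?case unfolding s e using h1 h2 by linarith
qed

theorem theorem4p3: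
  fixes R :: "'a set" and M K :: nat and w :: "'a \<Rightarrow> nat \<Rightarrow> nat"
    and Opt :: "'a set" and D :: "nat \<Rightarrow> 'a set"
  assumes "finite R" and "R \<noteq> {}"
    and "\<forall>t\<in>R. \<exists>j<M. w t j > 0"
    and "K \<le> card R"
    and "optimal_deletion R M w K Opt"
    and "greedy_run R M w K D"
  shows "Qerr R M w (D K) \<ge> (1 - kappa R M w) * Qerr R M w Opt"
proof -
  define Q where "Q = Qerr R M w"
  define g where "g t A = Q (insert t A) - Q A" for t A
  have gpos: "g t A > 0" if "t \<in> R" "A \<subseteq> R" "t \<notin> A" for t A
    using Qerr_strict[of R A t M w] that assms(1,3) unfolding g_def Q_def by auto
  have D0: "D 0 = {}" using assms(6) unfolding greedy_run_def by blast
  have ex: "\<forall>i\<in>{..<K}. \<exists>t. t \<in> R - D i \<and> D (Suc i) = insert t (D i) \<and>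
        (\<forall>t'\<in>R - D i. Q (insert t' (D i)) \<le> Q (insert t (D i)))"
    using assms(6) unfolding greedy_run_def Q_def by auto
  obtain d where d: "\<And>i. i < K \<Longrightarrow> d i \<in> R - D i \<and> D (Suc i) = insert (d i) (D i) \<and>
        (\<forall>t'\<in>R - D i. Q (insert t' (D i)) \<le> Q (insert (d i) (D i)))"
  proof -
    assume r: "\<And>d. (\<And>i. i < K \<Longrightarrow> d i \<in> R - D i \<and> D (Suc i) = insert (d i) (D i) \<and>
        (\<forall>t'\<in>R - D i. Q (insert t' (D i)) \<le> Q (insert (d i) (D i)))) \<Longrightarrow> thesis"
    from bchoice[OF ex] obtain d where "\<forall>i\<in>{..<K}. d i \<in> R - D i \<and> D (Suc i) = insert (d i) (D i) \<and>
        (\<forall>t'\<in>R - D i. Q (insert t' (D i)) \<le> Q (insert (d i) (D i)))" by blast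
    then show thesis using r[of d] by blast
  qed
  have Dd: "i \<le> K \<Longrightarrow> D i = d ` {..<i}" for i
  proof (induction i)
    case 0 then show ?case using D0 by simp
  next
    case (Suc i) then show ?case using d[of i] by (simp add: lessThan_Suc)
  qed
  have DR: "i \<le> K \<Longrightarrow> D i \<subseteq> R" for i
    using Dd d by fastforce
  have dnot: "i < K \<Longrightarrow> d i \<notin> D i" for i using d by blast
  have DsubK: "i \<le> K \<Longrightarrow> D i \<subseteq> D K" for i using Dd[of i] Dd[of K] by auto
  have dinj: "inj_on d {..<K}"
  proof (rule inj_onI)
    fix i j assume ij: "i \<in> {..<K}" "j \<in> {..<K}" "d i = d j"
    show "i = j"
    proof (rule linorder_cases[of i j])
      assume "i < j" then have "d i \<in> D j" using Dd[of j] ij(2) by auto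
      then show ?thesis using dnot[of j] ij by auto
    next
      assume "j < i" then have "d j \<in> D i" using Dd[of i] ij(1) by auto
      then show ?thesis using dnot[of i] ij by auto
    qed
  qed
  define S where "S = {(Q (insert t A) - Q A) / (Q (insert t B) - Q B) | t A B.
                          t \<in> R \<and> A \<subseteq> R - {t} \<and> B \<subseteq> R - {t}}"
  define m where "m = Min S"
  have kap: "1 - kappa R M w = m" unfolding kappa_def m_def S_def Q_def by simp
  have finS: "finite S"
  proof (rule finite_subset)
    show "S \<subseteq> (\<lambda>(t,A,B). (Q (insert t A) - Q A) / (Q (insert t B) - Q B)) ` (R \<times> Pow R \<times> Pow R)"
      (is "_ \<subseteq> ?B")
    proof
      fix x assume "x \<in> S"
      then obtain t A B where x: "x = (Q (insert t A) - Q A) / (Q (insert t B) - Q B)"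
        "t \<in> R" "A \<subseteq> R - {t}" "B \<subseteq> R - {t}" unfolding S_def by blast
      have "(t,A,B) \<in> R \<times> Pow R \<times> Pow R" using x by auto
      then show "x \<in> ?B" by (rule image_eqI[rotated]) (simp add: x(1))
    qed
    show "finite ?B" using assms(1) by simp
  qed
  have ratio: "m * g t B \<le> g t A" if "t \<in> R" "A \<subseteq> R - {t}" "B \<subseteq> R - {t}" for t A B
  proof -
    have "m \<le> g t A / g t B" unfolding m_def g_def
      by (rule Min_le[OF finS]) (unfold S_def, use that in blast)
    moreover have "g t B > 0" using gpos[of t B] that by auto
    ultimately show ?thesis by (simp add: pos_le_divide_eq)
  qed
  obtain t0 where t0: "t0 \<in> R" using assms(2) by blast
  have m1: "m \<le> 1"
    using ratio[of t0 "{}" "{}"] gpos[of t0 "{}"] t0 by simp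
  have tele: "Q (D K) - Q {} = (\<Sum>i<K. g (d i) (D i))"
  proof -
    have "(\<Sum>i<K. g (d i) (D i)) = (\<Sum>i<K. Q (D (Suc i)) - Q (D i))"
      using d unfolding g_def by (intro sum.cong) auto
    also have "\<dots> = Q (D K) - Q (D 0)" by (rule sum_lessThan_telescope)
    finally show ?thesis using D0 by simp
  qed
  have OR: "Opt \<subseteq> R" and cO: "card Opt \<le> K" using assms(5) unfolding optimal_deletion_def by auto
  have finO: "finite Opt" using OR assms(1) finite_subset by blast
  define P where "P = Opt \<inter> D K"
  define Sx where "Sx = Opt - D K"
  define IP where "IP = {i. i < K \<and> d i \<in> Opt}"
  define J where "J = {i. i < K \<and> d i \<notin> Opt}"
  have DK: "D K = d ` {..<K}" using Dd[of K] by simp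
  have "d ` IP = P"
  proof (intro equalityI subsetI)
    fix x assume "x \<in> d ` IP"
    then obtain i where i: "i < K" "d i \<in> Opt" "x = d i" unfolding IP_def by auto
    then show "x \<in> P" unfolding P_def DK by auto
  next
    fix x assume "x \<in> P"
    then have x: "x \<in> Opt" "x \<in> d ` {..<K}" unfolding P_def DK by auto
    then obtain i where i: "i < K" "x = d i" by auto
    then have "i \<in> IP" unfolding IP_def using x by simp
    then show "x \<in> d ` IP" using i by simp
  qed
  moreover have "IP \<subseteq> {..<K}" unfolding IP_def by auto
  then have "inj_on d IP" using dinj inj_on_subset by blast
  ultimately have cIP: "card IP = card P" using card_image by metis
  have JIK: "J \<union> IP = {..<K}" unfolding J_def IP_def by auto
  have JI0: "J \<inter> IP = {}" unfolding J_def IP_def by auto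
  have finJ: "finite J" by (rule finite_subset[of _ "{..<K}"]) (use JIK in blast, simp)
  have finIP: "finite IP" by (rule finite_subset[of _ "{..<K}"]) (use JIK in blast, simp)
  have c1: "card J + card IP = K"
    using card_Un_disjoint[OF finJ finIP JI0] JIK by simp
  have SP: "Sx \<union> P = Opt" unfolding Sx_def P_def by blast
  have SP0: "Sx \<inter> P = {}" unfolding Sx_def P_def by blast
  have finSx: "finite Sx" using finO unfolding Sx_def by simp
  have finP: "finite P" using finO unfolding P_def by simp
  have c2: "card Sx + card P = card Opt"
    using card_Un_disjoint[OF finSx finP SP0] SP by simp
  have "card Sx \<le> card J" using c1 c2 cO cIP by linarith
  from card_le_inj[OF finSx finJ this] obtain f where f: "f ` Sx \<subseteq> J" "inj_on f Sx" by blast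
  define idx where "idx = the_inv_into {..<K} d"
  have idx: "idx u < K \<and> d (idx u) = u" if "u \<in> D K" for u
  proof -
    have "u \<in> d ` {..<K}" using that Dd[of K] by simp
    then show ?thesis unfolding idx_def
      using f_the_inv_into_f[OF dinj] the_inv_into_into[OF dinj] by auto
  qed
  define F where "F u = (if u \<in> D K then idx u else f u)" for u
  have FK: "F u < K" if "u \<in> Opt" for u
    using idx f that unfolding F_def Sx_def J_def by auto
  have Fin: "d (F x) = x" if "x \<in> D K" for x
    using idx[OF that] that unfolding F_def by simp
  have Fout: "F x = f x \<and> F x \<in> J" if "x \<in> Opt" "x \<notin> D K" for x
  proof -
    have "x \<in> Sx" unfolding Sx_def using that by blast
    then have "f x \<in> J" using f(1) by blast
    then show ?thesis using that unfolding F_def by simp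
  qed
  have Finj: "inj_on F Opt"
  proof (rule inj_onI)
    fix x y assume xy: "x \<in> Opt" "y \<in> Opt" "F x = F y"
    show "x = y"
    proof (cases "x \<in> D K")
      case xin: True
      show ?thesis
      proof (cases "y \<in> D K")
        case True
        then show ?thesis using Fin[OF xin] Fin[OF True] xy(3) by metis
      next
        case False
        have "d (F y) \<notin> Opt" using Fout[OF xy(2) False] unfolding J_def by blast
        then show ?thesis using Fin[OF xin] xy by simp
      qed
    next
      case xout: False
      show ?thesis
      proof (cases "y \<in> D K")
        case True
        have "d (F x) \<notin> Opt" using Fout[OF xy(1) xout] unfolding J_def by blast
        then show ?thesis using Fin[OF True] xy by simp
      next
        case False
        have "x \<in> Sx" "y \<in> Sx" unfolding Sx_def using xy xout False by auto
        moreover have "f x = f y" using Fout[OF xy(1) xout] Fout[OF xy(2) False] xy(3) by simp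
        ultimately show ?thesis using f(2) unfolding inj_on_def by blast
      qed
    qed
  qed
  define h where "h u = g (d (F u)) (D (F u))" for u
  have cond: "\<forall>u\<in>Opt. \<forall>B. B \<subseteq> R - {u} \<longrightarrow> m * (Q (insert u B) - Q B) \<le> h u"
  proof (intro ballI allI impI)
    fix u B assume u: "u \<in> Opt" and B: "B \<subseteq> R - {u}"
    have oR: "u \<in> R" using u OR by auto
    show "m * (Q (insert u B) - Q B) \<le> h u"
    proof (cases "u \<in> D K")
      case True
      then have i: "F u < K" "d (F u) = u" using idx unfolding F_def by auto
      have "D (F u) \<subseteq> R - {u}" using DR[of "F u"] dnot[of "F u"] i by auto
      then show ?thesis using ratio[of u "D (F u)" B] B oR i unfolding h_def g_def by auto
    next
      case False
      then have i: "F u < K" "F u = f u" using FK[OF u] Fout[OF u False] by auto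
      have nD: "u \<notin> D (F u)" using DsubK[of "F u"] i False by auto
      have DD: "D (F u) \<subseteq> R - {u}" using DR[of "F u"] nD i by auto
      have "g u (D (F u)) \<le> g (d (F u)) (D (F u))"
        using d[of "F u"] i oR nD unfolding g_def by auto
      then show ?thesis using ratio[of u "D (F u)" B] B oR DD unfolding h_def g_def by auto
    qed
  qed
  have "m * (Q Opt - Q {}) \<le> (\<Sum>u\<in>Opt. h u)"
    by (rule tele_bound[OF finO OR cond])
  also have "(\<Sum>u\<in>Opt. h u) = (\<Sum>i\<in>F ` Opt. g (d i) (D i))"
    unfolding h_def using sum.reindex[OF Finj, of "\<lambda>i. g (d i) (D i)"] by simp
  also have "\<dots> \<le> (\<Sum>i<K. g (d i) (D i))"
  proof (rule sum_mono2)
    show "F ` Opt \<subseteq> {..<K}" using FK by auto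
    show "0 \<le> g (d i) (D i)" if "i \<in> {..<K} - F ` Opt" for i
      using gpos[of "d i" "D i"] d[of i] DR[of i] that by fastforce
  qed simp
  finally have main: "m * (Q Opt - Q {}) \<le> Q (D K) - Q {}" using tele by simp
  have Q0: "Q {} = real M" unfolding Q_def by (rule Qerr_empty)
  have "(1 - m) * real M \<ge> 0" using m1 by simp
  then have "m * Q Opt \<le> Q (D K)" using main Q0 by (simp add: algebra_simps)
  then show ?thesis using kap unfolding Q_def by simp
qed

end
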